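(* Let $k\ge2$ and let $\mathcal{H}=(V,E)$ be a $k$-uniform linear hypergraph with $n$ vertices satisfying $n\le k^2+k-2$. Then $\mathrm{q}(\mathcal{H})\le \Delta([\mathcal{H}]_2)+1$.
   Context: A hypergraph $\mathcal{H}=(V,E)$ has a finite vertex set $V$ and a finite set $E$ of nonempty subsets of $V$ (hyperedges); linear means distinct hyperedges share at most one vertex; $k$-uniform means every hyperedge has $k$ elements. The 2-section $[\mathcal{H}]_2$ is the simple graph on $V$ where distinct vertices are adjacent iff some hyperedge contains both; $\Delta([\mathcal{H}]_2)$ is its maximum degree. The chromatic index $\mathrm{q}(\mathcal{H})$ is the least number of colors in a coloring of hyperedges where distinct intersecting hyperedges get different colors. *)

theory Defs
  imports Main
begin

definition hypergraph :: "'a set \<Rightarrow> 'a set set \<Rightarrow> bool" where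
  "hypergraph V E \<longleftrightarrow> finite V \<and> finite E \<and> (\<forall>e\<in>E. e \<noteq> {} \<and> e \<subseteq> V)"

definition linear_hg :: "'a set set \<Rightarrow> bool" where
  "linear_hg E \<longleftrightarrow> (\<forall>e\<in>E. \<forall>f\<in>E. e \<noteq> f \<longrightarrow> card (e \<inter> f) \<le> 1)"

definition uniform_hg :: "nat \<Rightarrow> 'a set set \<Rightarrow> bool" where
  "uniform_hg k E \<longleftrightarrow> (\<forall>e\<in>E. card e = k)"

text \<open>Adjacency in the 2-section: distinct vertices lying in a common hyperedge.\<close>
definition adj2 :: "'a set set \<Rightarrow> 'a \<Rightarrow> 'a \<Rightarrow> bool" where
  "adj2 E u v \<longleftrightarrow> u \<noteq> v \<and> (\<exists>e\<in>E. u \<in> e \<and> v \<in> e)"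

definition deg2 :: "'a set \<Rightarrow> 'a set set \<Rightarrow> 'a \<Rightarrow> nat" where
  "deg2 V E u = card {v\<in>V. adj2 E u v}"

definition maxdeg2 :: "'a set \<Rightarrow> 'a set set \<Rightarrow> nat" where
  "maxdeg2 V E = Max (insert 0 (deg2 V E ` V))"

definition proper_edge_colouring :: "'a set set \<Rightarrow> nat \<Rightarrow> ('a set \<Rightarrow> nat) \<Rightarrow> bool" where
  "proper_edge_colouring E q c \<longleftrightarrow>
     (\<forall>e\<in>E. c e < q) \<and> (\<forall>e\<in>E. \<forall>f\<in>E. e \<noteq> f \<and> e \<inter> f \<noteq> {} \<longrightarrow> c e \<noteq> c f)"

definition chromatic_index :: "'a set set \<Rightarrow> nat" where
  "chromatic_index E = (LEAST q. \<exists>c. proper_edge_colouring E q c)"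

end

theory Submission
  imports Defs
begin


definition dF :: "'a set set \<Rightarrow> 'a \<Rightarrow> nat" where
  "dF F v = card {e\<in>F. v\<in>e}"
definition star :: "'a set set \<Rightarrow> 'a \<Rightarrow> 'a set" where
  "star F v = \<Union>((\<lambda>e. e - {v}) ` {e\<in>F. v\<in>e})"
definition meet :: "'a set set \<Rightarrow> 'a set \<Rightarrow> 'a set set" where
  "meet F e = {f\<in>F. f \<noteq> e \<and> f \<inter> e \<noteq> {}}"

lemma proper_mono: "proper_edge_colouring F q c \<Longrightarrow> q \<le> q' \<Longrightarrow> proper_edge_colouring F q' c"
  unfolding proper_edge_colouring_def by fastforce

locale lhg =
  fixes V :: "'a set" and E :: "'a set set" and k :: nat
  assumes k2: "k \<ge> 2"
    and hg: "hypergraph V E"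
    and un: "uniform_hg k E"
    and lin: "linear_hg E"
    and cV: "card V \<le> k^2 + k - 2"
begin

lemma finE: "finite E" using hg unfolding hypergraph_def by auto
lemma finV: "finite V" using hg unfolding hypergraph_def by auto
lemma subV: "e \<in> E \<Longrightarrow> e \<subseteq> V" using hg unfolding hypergraph_def by auto
lemma cardE: "e \<in> E \<Longrightarrow> card e = k" using un unfolding uniform_hg_def by auto
lemma fin_e: "e \<in> E \<Longrightarrow> finite e" using subV finV finite_subset by blast

lemma two_common:
  assumes "e \<in> E" "f \<in> E" "x \<in> e" "x \<in> f" "y \<in> e" "y \<in> f" "x \<noteq> y"
  shows "e = f"
proof (rule ccontr)
  assume "e \<noteq> f"
  then have "card (e \<inter> f) \<le> 1" using lin assms unfolding linear_hg_def by auto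
  moreover have "{x,y} \<subseteq> e \<inter> f" using assms by auto
  moreover have "finite (e \<inter> f)" using fin_e assms by auto
  ultimately have "card {x,y} \<le> 1" by (meson card_mono le_trans)
  then show False using assms by auto
qed

lemma star_card:
  assumes "F \<subseteq> E"
  shows "card (star F v) = dF F v * (k-1)"
proof -
  have fF: "finite F" using assms finE finite_subset by blast
  have "card (star F v) = (\<Sum>e\<in>{e\<in>F. v\<in>e}. card (e - {v}))"
    unfolding star_def
  proof (rule card_UN_disjoint)
    show "finite {e \<in> F. v \<in> e}" using fF by auto
    show "\<forall>i\<in>{e \<in> F. v \<in> e}. finite (i - {v})" using fin_e assms by auto
    show "\<forall>i\<in>{e \<in> F. v \<in> e}. \<forall>j\<in>{e \<in> F. v \<in> e}. i \<noteq> j \<longrightarrow> (i - {v}) \<inter> (j - {v}) = {}"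
      using two_common assms by blast
  qed
  also have "\<dots> = (\<Sum>e\<in>{e\<in>F. v\<in>e}. k - 1)"
    by (rule sum.cong) (use assms cardE fin_e in auto)
  finally show ?thesis unfolding dF_def by simp
qed

lemma star_sub: "F \<subseteq> E \<Longrightarrow> star F v \<subseteq> \<Union>F - {v}"
  unfolding star_def by auto

lemma dF_mono: "F \<subseteq> E \<Longrightarrow> dF F v \<le> dF E v"
  unfolding dF_def by (rule card_mono) (use finE in auto)

lemma dF_le:
  assumes "v \<in> V" shows "dF E v \<le> k + 1"
proof (rule ccontr)
  assume "\<not> ?thesis"
  then have d: "k + 2 \<le> dF E v" by simp
  have "star E v \<subseteq> V - {v}" using star_sub[of E v] subV by auto
  then have "card (star E v) \<le> card V - 1"
    using finV assms by (metis card_Diff_singleton card_mono finite_Diff)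
  then have "dF E v * (k-1) \<le> k^2 + k - 3" using star_card[of E v] cV by simp
  moreover have "(k+2)*(k-1) \<le> dF E v * (k-1)" using d by (rule mult_le_mono1)
  moreover have "(k+2)*(k-1) = k^2 + k - 2" using k2
    by (simp add: power2_eq_square algebra_simps diff_mult_distrib2)
  moreover have "k^2 \<ge> 4" using k2 power_mono[of 2 k 2] by simp
  ultimately show False using k2 by linarith
qed

lemma deg2_eq:
  assumes "v \<in> V" shows "deg2 V E v = dF E v * (k-1)"
proof -
  have "{w\<in>V. adj2 E v w} = star E v"
    unfolding star_def adj2_def using subV by auto
  then show ?thesis unfolding deg2_def using star_card[of E v] by simp
qed

lemma M_ge:
  assumes "v \<in> V" shows "(k-1) * dF E v \<le> maxdeg2 V E"
proof -
  have "deg2 V E v \<le> maxdeg2 V E" unfolding maxdeg2_def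
    using assms finV by (intro Max_ge) auto
  then show ?thesis using deg2_eq[OF assms] by (simp add: mult.commute)
qed

lemma meet_card:
  assumes "F \<subseteq> E" "e \<in> F"
  shows "card (meet F e) \<le> (\<Sum>v\<in>e. dF F v - 1)"
proof -
  have fF: "finite F" using assms finE finite_subset by blast
  have "meet F e = (\<Union>v\<in>e. {f\<in>F. v\<in>f} - {e})" unfolding meet_def by auto
  then have "card (meet F e) \<le> (\<Sum>v\<in>e. card ({f\<in>F. v\<in>f} - {e}))"
    using card_UN_le fin_e assms by (metis subsetD)
  also have "\<dots> = (\<Sum>v\<in>e. dF F v - 1)"
    by (rule sum.cong) (use assms fF in \<open>auto simp: dF_def\<close>)
  finally show ?thesis .
qed

end

context lhg begin

lemma full_case:
  assumes FE: "F \<subseteq> E" and Fne: "F \<noteq> {}"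
    and full: "\<forall>e\<in>F. \<forall>v\<in>e. dF F v = k + 1"
  shows "\<exists>c. proper_edge_colouring F (k^2) c"
proof -
  have fF: "finite F" using FE finE finite_subset by blast
  define W where "W = \<Union>F"
  have fW: "finite W" unfolding W_def using fF fin_e FE by auto
  have WV: "W \<subseteq> V" unfolding W_def using FE subV by auto
  have dW: "\<forall>w\<in>W. card {e\<in>F. w\<in>e} = k + 1" using full unfolding W_def dF_def by auto
  have "(\<Sum>e\<in>F. card {w\<in>W. w\<in>e}) = (k+1) * card W"
    by (rule sum_multicount[OF fF fW]) (use dW in auto)
  moreover have "(\<Sum>e\<in>F. card {w\<in>W. w\<in>e}) = (\<Sum>e\<in>F. k)"
  proof (rule sum.cong)
    fix e assume "e \<in> F"
    then have "{w\<in>W. w\<in>e} = e" unfolding W_def by auto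
    then show "card {w\<in>W. w\<in>e} = k" using \<open>e\<in>F\<close> FE cardE by auto
  qed simp
  ultimately have dc: "card F * k = card W * k + card W" by (simp add: algebra_simps)
  then have "k dvd card W" by (metis dvd_add_right_iff dvd_triv_right)
  then obtain q where q: "card W = k * q" by auto
  obtain e0 where e0: "e0 \<in> F" using Fne by auto
  have "card e0 = k" using e0 FE cardE by auto
  then obtain v0 where v0: "v0 \<in> e0" using k2 by fastforce
  have v0W: "v0 \<in> W" using v0 e0 W_def by auto
  have kk: "(k+1)*(k-1) = k*k - 1" using k2 by (simp add: algebra_simps diff_mult_distrib2)
  have starc: "\<And>u. u \<in> W \<Longrightarrow> card (star F u) = k*k - 1"
  proof -
    fix u assume "u \<in> W"
    then have "dF F u = k+1" using full unfolding W_def by auto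
    then show "card (star F u) = k*k - 1" using star_card[OF FE, of u] kk by (simp add: mult.commute)
  qed
  have starsub: "\<And>u. star F u \<subseteq> W - {u}" using star_sub[OF FE] W_def by auto
  have "card (star F v0) \<le> card (W - {v0})" using starsub fW by (intro card_mono) auto
  then have "k*k - 1 \<le> card W - 1" using starc[OF v0W] v0W fW by simp
  moreover have "card W \<ge> 1" using v0W fW by (metis One_nat_def Suc_leI card_gt_0_iff empty_iff)
  moreover have "k*k \<ge> 1" using k2 by simp
  ultimately have lo: "k*k \<le> card W" by linarith
  have "card W \<le> k*k + k - 2" using card_mono[OF finV WV] cV by (simp add: power2_eq_square)
  then have "k * q < k * (k+1)" using q k2 by simp
  then have "q < k + 1" by (meson mult_less_cancel1)
  moreover have "k * k \<le> k * q" using lo q by simp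
  then have "k \<le> q" using k2 by simp
  ultimately have "q = k" by simp
  then have cW: "card W = k*k" using q by simp
  have "card F * k = (k*k + k) * k" using dc cW by (simp add: algebra_simps)
  then have cF: "card F = k*k + k" using k2 by simp
  have adj: "\<And>u w. u \<in> W \<Longrightarrow> w \<in> W \<Longrightarrow> \<exists>e\<in>F. u \<in> e \<and> w \<in> e"
  proof -
    fix u w assume u: "u \<in> W" and w: "w \<in> W"
    show "\<exists>e\<in>F. u \<in> e \<and> w \<in> e"
    proof (cases "w = u")
      case True then show ?thesis using u W_def by auto
    next
      case False
      have "star F u = W - {u}"
        using card_subset_eq[of "W - {u}" "star F u"] starsub[of u] starc[OF u] fW u cW by auto
      then have "w \<in> star F u" using False w by auto
      then show ?thesis unfolding star_def by auto
    qed
  qed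
  have par: "\<And>g f1 f2. g \<in> F \<Longrightarrow> f1 \<in> F \<Longrightarrow> f2 \<in> F \<Longrightarrow> f1 \<inter> g = {} \<Longrightarrow> f2 \<inter> g = {}
     \<Longrightarrow> f1 \<noteq> f2 \<Longrightarrow> f1 \<inter> f2 = {}"
  proof (rule ccontr)
    fix g f1 f2 assume g: "g \<in> F" and f1: "f1 \<in> F" and f2: "f2 \<in> F" and d1: "f1 \<inter> g = {}"
      and d2: "f2 \<inter> g = {}" and ne: "f1 \<noteq> f2" and "f1 \<inter> f2 \<noteq> {}"
    then obtain u where u1: "u \<in> f1" and u2: "u \<in> f2" by auto
    have uW: "u \<in> W" using u1 f1 W_def by auto
    have ug: "u \<notin> g" using u1 d1 by auto
    define h where "h w = (SOME e. e \<in> F \<and> u \<in> e \<and> w \<in> e)" for w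
    have hw: "\<And>w. w \<in> g \<Longrightarrow> h w \<in> F \<and> u \<in> h w \<and> w \<in> h w"
    proof -
      fix w assume "w \<in> g"
      then have "w \<in> W" using g W_def by auto
      then have "\<exists>e. e \<in> F \<and> u \<in> e \<and> w \<in> e" using adj uW by blast
      then show "h w \<in> F \<and> u \<in> h w \<and> w \<in> h w" unfolding h_def by (rule someI_ex)
    qed
    have inj: "inj_on h g"
    proof (rule inj_onI)
      fix x y assume x: "x \<in> g" and y: "y \<in> g" and hxy: "h x = h y"
      show "x = y"
      proof (rule ccontr)
        assume "x \<noteq> y"
        then have "h x = g" using two_common[of "h x" g x y] hw[OF x] hw[OF y] hxy x y g FE by auto
        then show False using hw[OF x] ug by auto
      qed
    qed
    have sub: "h ` g \<union> {f1, f2} \<subseteq> {e\<in>F. u\<in>e}" using hw f1 f2 u1 u2 by auto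
    have disj: "h ` g \<inter> {f1, f2} = {}" using hw d1 d2 by blast
    have "card (h ` g \<union> {f1, f2}) = card (h ` g) + card {f1,f2}"
      using disj fin_e g FE by (intro card_Un_disjoint) auto
    also have "\<dots> = k + 2" using card_image[OF inj] cardE g FE ne by auto
    finally have "k + 2 \<le> dF F u" unfolding dF_def using card_mono[OF _ sub] fF by simp
    then show False using full uW W_def by fastforce
  qed
  define P where "P e = {f\<in>F. f = e \<or> f \<inter> e = {}}" for e
  have Pdisj: "\<And>e x y. e \<in> F \<Longrightarrow> x \<in> P e \<Longrightarrow> y \<in> P e \<Longrightarrow> x \<noteq> y \<Longrightarrow> x \<inter> y = {}"
    unfolding P_def using par by blast
  have Pcard: "\<And>e. e \<in> F \<Longrightarrow> k \<le> card (P e)"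
  proof -
    fix e assume e: "e \<in> F"
    have "F = P e \<union> meet F e" unfolding P_def meet_def by auto
    then have a1: "card F \<le> card (P e) + card (meet F e)" by (metis card_Un_le)
    have a2: "card (meet F e) \<le> (\<Sum>v\<in>e. dF F v - 1)" using meet_card[OF FE e] .
    have a3: "(\<Sum>v\<in>e. dF F v - 1) = (\<Sum>v\<in>e. k)" using full e by simp
    have "card e = k" using e FE cardE by blast
    with a3 have "(\<Sum>v\<in>e. dF F v - 1) = k * k" by simp
    with a1 a2 show "k \<le> card (P e)" using cF by linarith
  qed
  have "dF F v0 = k + 1" using full e0 v0 by auto
  have "\<not> {x\<in>F. v0 \<in> x} \<subseteq> {e0}"
  proof
    assume "{x\<in>F. v0 \<in> x} \<subseteq> {e0}"
    then have "card {x\<in>F. v0 \<in> x} \<le> card {e0}" by (intro card_mono) auto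
    then show False using \<open>dF F v0 = k + 1\<close> k2 unfolding dF_def by simp
  qed
  then obtain f0 where f0: "f0 \<in> F" "v0 \<in> f0" "f0 \<noteq> e0" by auto
  have PP: "P e0 \<inter> P f0 = {}"
  proof (rule ccontr)
    assume "P e0 \<inter> P f0 \<noteq> {}"
    then obtain x where x1: "x \<in> P e0" and x2: "x \<in> P f0" by auto
    have "x \<noteq> e0" using x2 f0 v0 unfolding P_def by auto
    moreover have "x \<noteq> f0" using x1 f0 v0 unfolding P_def by auto
    ultimately have "e0 \<inter> x = {}" "f0 \<inter> x = {}" using x1 x2 unfolding P_def by auto
    then have "e0 \<inter> f0 = {}" using par[of x e0 f0] x1 e0 f0 unfolding P_def by auto
    then show False using v0 f0 by auto
  qed
  define R where "R = F - P e0 - P f0"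
  have PF: "\<And>e. P e \<subseteq> F" unfolding P_def by auto
  have "card (P e0 \<union> P f0) = card (P e0) + card (P f0)"
    using PP PF fF by (intro card_Un_disjoint) (auto intro: finite_subset)
  moreover have "R = F - (P e0 \<union> P f0)" unfolding R_def by auto
  ultimately have "card R = card F - (card (P e0) + card (P f0))"
    using PF fF cF by (metis card_Diff_subset finite_subset le_sup_iff)
  moreover have "2*k \<le> k*k" using k2 by (rule mult_le_mono1)
  ultimately have cR: "card R + 2 \<le> k*k"
    using Pcard[OF e0] Pcard[OF f0(1)] cF k2 by linarith
  obtain hb where hb: "bij_betw hb R {0..<card R}"
    using ex_bij_betw_finite_nat fF R_def by blast
  define c where "c x = (if x \<in> P e0 then 0 else if x \<in> P f0 then 1 else hb x + 2)" for x
  show ?thesis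
  proof (intro exI[of _ c], unfold proper_edge_colouring_def, intro conjI ballI impI)
    fix e assume "e \<in> F"
    show "c e < k^2"
    proof (cases "e \<in> P e0 \<or> e \<in> P f0")
      case True then show ?thesis unfolding c_def using k2 cR by (auto simp: power2_eq_square)
    next
      case False
      then have "e \<in> R" using \<open>e\<in>F\<close> R_def by auto
      then have "hb e < card R" using hb by (auto dest: bij_betwE)
      then show ?thesis unfolding c_def using False cR by (auto simp: power2_eq_square)
    qed
  next
    fix e f assume e: "e \<in> F" and f: "f \<in> F" and ef: "e \<noteq> f \<and> e \<inter> f \<noteq> {}"
    have hh: "e \<in> R \<Longrightarrow> f \<in> R \<Longrightarrow> hb e \<noteq> hb f" using hb ef by (metis bij_betw_inv_into_left)
    have n1: "\<not> (e \<in> P e0 \<and> f \<in> P e0)" using Pdisj[OF e0] ef by blast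
    have n2: "\<not> (e \<in> P f0 \<and> f \<in> P f0)" using Pdisj[OF f0(1)] ef by blast
    show "c e \<noteq> c f"
    proof (cases "e \<in> P e0 \<or> e \<in> P f0 \<or> f \<in> P e0 \<or> f \<in> P f0")
      case True then show ?thesis unfolding c_def using n1 n2 PP by auto
    next
      case False
      then have "e \<in> R" "f \<in> R" using e f R_def by auto
      then show ?thesis unfolding c_def using False hh by auto
    qed
  qed
qed

end

context lhg begin

lemma arith_case:
  assumes FE: "F \<subseteq> E" and e: "e \<in> F" and big: "maxdeg2 V E < card (meet F e)"
  shows "(\<forall>v\<in>e. dF F v = k + 1) \<and> k^2 \<le> maxdeg2 V E + 1"
proof -
  define M where "M = maxdeg2 V E"
  have eE: "e \<in> E" using e FE by auto
  have ce: "card e = k" using cardE[OF eE] .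
  have fe: "finite e" using fin_e[OF eE] .
  have ene: "e \<noteq> {}" using ce k2 by auto
  have up: "\<And>v. v \<in> e \<Longrightarrow> dF F v \<le> k + 1"
    using dF_le dF_mono[OF FE] subV[OF eE] by (meson le_trans subsetD)
  have Mv: "\<And>v. v \<in> e \<Longrightarrow> (k-1) * dF F v \<le> M"
    unfolding M_def using M_ge dF_mono[OF FE] subV[OF eE]
    by (meson le_trans mult_le_mono2 subsetD)
  have S: "M < (\<Sum>v\<in>e. dF F v - 1)" using meet_card[OF FE e] big M_def by linarith
  define T where "T = Max (dF F ` e)"
  have Tin: "T \<in> dF F ` e" unfolding T_def using fe ene by (intro Max_in) auto
  then obtain v1 where v1: "v1 \<in> e" "dF F v1 = T" by auto
  have Tge: "\<And>v. v \<in> e \<Longrightarrow> dF F v \<le> T" unfolding T_def using fe by (intro Max_ge) auto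
  have "(\<Sum>v\<in>e. dF F v - 1) \<le> (\<Sum>v\<in>e. T - 1)"
    by (rule sum_mono) (use Tge in \<open>simp add: diff_le_mono\<close>)
  then have S2: "(\<Sum>v\<in>e. dF F v - 1) \<le> k * (T - 1)" using ce by simp
  have MT: "(k-1) * T \<le> M" using Mv v1 by metis
  have T: "T = k + 1"
  proof (rule ccontr)
    assume "T \<noteq> k + 1"
    then have "T \<le> k" using up v1 by fastforce
    then have "k * (T - 1) \<le> (k-1) * T"
      by (simp add: algebra_simps diff_mult_distrib diff_mult_distrib2)
    then show False using S S2 MT by linarith
  qed
  have kk: "(k-1)*(k+1) = k*k - 1" using k2 by (simp add: algebra_simps diff_mult_distrib2)
  have Mk: "k*k - 1 \<le> M" using MT T kk by simp
  have all: "\<forall>v\<in>e. dF F v = k + 1"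
  proof (rule ccontr)
    assume "\<not> ?thesis"
    then obtain v0 where v0: "v0 \<in> e" "dF F v0 \<noteq> k + 1" by auto
    then have d0: "dF F v0 - 1 \<le> k - 1" using up by fastforce
    have "(\<Sum>v\<in>e. dF F v - 1) = (dF F v0 - 1) + (\<Sum>v\<in>e - {v0}. dF F v - 1)"
      using fe v0 sum.remove by metis
    also have "(\<Sum>v\<in>e - {v0}. dF F v - 1) \<le> (\<Sum>v\<in>e - {v0}. k)"
      by (rule sum_mono) (use up in fastforce)
    also have "(\<Sum>v\<in>e - {v0}. k) = (k - 1) * k" using ce v0 fe by simp
    finally have "(\<Sum>v\<in>e. dF F v - 1) \<le> (k - 1) + (k-1)*k" using d0 by linarith
    also have "(k - 1) + (k-1)*k = k*k - 1" using k2
      by (simp add: algebra_simps diff_mult_distrib)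
    finally show False using S Mk by linarith
  qed
  have "k^2 \<le> M + 1" using Mk k2 by (simp add: power2_eq_square)
  then show ?thesis using all M_def by simp
qed

end

context lhg begin

lemma colour_all:
  assumes "F \<subseteq> E"
    and full_case: "\<And>F. F \<subseteq> E \<Longrightarrow> F \<noteq> {} \<Longrightarrow> \<forall>e\<in>F. \<forall>v\<in>e. dF F v = k + 1
        \<Longrightarrow> \<exists>c. proper_edge_colouring F (k^2) c"
  shows "\<exists>c. proper_edge_colouring F (maxdeg2 V E + 1) c"
proof -
  define M where "M = maxdeg2 V E"
  have "finite F" using assms finE finite_subset by blast
  then show ?thesis using assms(1) unfolding M_def[symmetric]
  proof (induction F rule: finite_psubset_induct)
    case (psubset F)
    show ?case
    proof (cases "F = {}")
      case True then show ?thesis unfolding proper_edge_colouring_def by auto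
    next
      case Fne: False
      show ?thesis
      proof (cases "\<exists>e\<in>F. card (meet F e) \<le> M")
        case True
        then obtain e where e: "e \<in> F" and me: "card (meet F e) \<le> M" by auto
        have "F - {e} \<subset> F" using e by auto
        then obtain c where c: "proper_edge_colouring (F - {e}) (M + 1) c"
          using psubset.IH psubset.prems by blast
        define U where "U = c ` meet F e"
        have "finite (meet F e)" using psubset.hyps unfolding meet_def by auto
        then have "card U \<le> M" unfolding U_def using me card_image_le le_trans by blast
        then have "card U < card {0..<M+1}" by simp
        moreover have "finite U" unfolding U_def using \<open>finite (meet F e)\<close> by simp
        ultimately have "\<not> {0..<M+1} \<subseteq> U" using card_mono not_le by metis
        then obtain col where col: "col \<in> {0..<M+1}" "col \<notin> U" by blast
        define c' where "c' = c(e := col)"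
        show ?thesis
        proof (intro exI[of _ c'], unfold proper_edge_colouring_def, intro conjI ballI impI)
          fix f assume "f \<in> F"
          then show "c' f < M + 1" using c col unfolding c'_def proper_edge_colouring_def by auto
        next
          fix f g assume f: "f \<in> F" and g: "g \<in> F" and fg: "f \<noteq> g \<and> f \<inter> g \<noteq> {}"
          show "c' f \<noteq> c' g"
          proof (cases "f = e \<or> g = e")
            case True
            then have "(f = e \<and> g \<in> meet F e) \<or> (g = e \<and> f \<in> meet F e)"
              using f g fg unfolding meet_def by auto
            then show ?thesis using col fg unfolding c'_def U_def by auto
          next
            case False
            then show ?thesis using c f g fg unfolding c'_def proper_edge_colouring_def by auto
          qed
        qed
      next
        case False
        then have big: "\<forall>e\<in>F. M < card (meet F e)" by auto
        obtain e where e: "e \<in> F" using Fne by auto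
        have "\<forall>e\<in>F. \<forall>v\<in>e. dF F v = k + 1"
          using arith_case[OF psubset.prems] big M_def by blast
        then obtain c where "proper_edge_colouring F (k^2) c"
          using full_case psubset.prems Fne by blast
        moreover have "k^2 \<le> M + 1" using arith_case[OF psubset.prems e] big e M_def by blast
        ultimately show ?thesis using proper_mono by blast
      qed
    qed
  qed
qed

end

theorem theorem5p2:
  fixes V :: "'a set" and E :: "'a set set" and k :: nat
  assumes "k \<ge> 2"
    and "hypergraph V E"
    and "uniform_hg k E"
    and "linear_hg E"
    and "card V \<le> k^2 + k - 2"
  shows "chromatic_index E \<le> maxdeg2 V E + 1"
proof -
  interpret lhg V E k using assms by unfold_locales
  obtain c where "proper_edge_colouring E (maxdeg2 V E + 1) c"
    using colour_all[OF order_refl full_case] by blast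
  then show ?thesis unfolding chromatic_index_def by (intro Least_le) blast
qed

end
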